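(* Let $\Xi$, $x_0=1-x_1-x_2$, $F_\beta$, $\beta_3$, $p_\beta$ be as in the context, let $\beta_1=2$, and for $\beta>\beta_3$ let $h_\beta=F_\beta(p_\beta,p_\beta)$ (which equals $F_\beta(1-2p_\beta,p_\beta)=F_\beta(p_\beta,1-2p_\beta)$). Then there exists $\beta_2\in(\beta_3,\beta_1)$ such that $h_\beta>0$ for $\beta\in(\beta_3,\beta_2)$, $h_{\beta_2}=0$, and $h_\beta<0$ for $\beta\in(\beta_2,\beta_1)$.
   Context: $\Xi=\{(x_1,x_2): x_1,x_2\ge0,\ x_1+x_2\le1\}$, $x_0=1-x_1-x_2$, and $F_\beta(\mathbf{x})=-\frac12|\sum_{k=0}^2x_k\mathbf{v}_k|^2+\frac1\beta\sum_{k=0}^2x_k\log(3x_k)$ with $\mathbf{v}_k=(\cos(2\pi k/3),\sin(2\pi k/3))$; note $F_\beta(1/3,1/3)=0$. Define $f_0(t)=\frac{2}{3(1-3t)}\log\frac{1-2t}{t}$ for $t\in(0,1/2)\setminus\{1/3\}$, $f_0(1/3)=2$; $m_0$ is the minimizer of $f_0$ and $\beta_3=f_0(m_0)$. For $\beta>\beta_3$, $p_\beta$ is the smaller of the two solutions of $f_0(t)=\beta$ in $(0,1/2)$ (so $p_\beta<m_0$). *)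

theory Defs
  imports Complex_Main
begin

definition vx :: "nat \<Rightarrow> real" where "vx k = cos (2 * pi * real k / 3)"
definition vy :: "nat \<Rightarrow> real" where "vy k = sin (2 * pi * real k / 3)"

definition bary :: "real \<Rightarrow> real \<Rightarrow> nat \<Rightarrow> real" where
  "bary x1 x2 k = (if k = 0 then 1 - x1 - x2 else if k = 1 then x1 else x2)"

definition Fbeta :: "real \<Rightarrow> real \<Rightarrow> real \<Rightarrow> real" where
  "Fbeta \<beta> x1 x2 =
     - (1/2) * ((\<Sum>k\<le>2. bary x1 x2 k * vx k)\<^sup>2 + (\<Sum>k\<le>2. bary x1 x2 k * vy k)\<^sup>2)
     + (1/\<beta>) * (\<Sum>k\<le>2. bary x1 x2 k * ln (3 * bary x1 x2 k))"

definition f0 :: "real \<Rightarrow> real" where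
  "f0 t = (if t = 1/3 then 2 else 2 / (3 * (1 - 3*t)) * ln ((1 - 2*t) / t))"

definition m0 :: real where
  "m0 = (THE m. 0 < m \<and> m < 1/2 \<and> (\<forall>t. 0 < t \<and> t < 1/2 \<longrightarrow> f0 m \<le> f0 t))"

definition beta3 :: real where "beta3 = f0 m0"

definition beta1 :: real where "beta1 = 2"

definition pbeta :: "real \<Rightarrow> real" where
  "pbeta \<beta> = (LEAST t. 0 < t \<and> t < 1/2 \<and> f0 t = \<beta>)"

definition hbeta :: "real \<Rightarrow> real" where
  "hbeta \<beta> = Fbeta \<beta> (pbeta \<beta>) (pbeta \<beta>)"

end

theory Submission
  imports Defs
begin
definition L :: "real \<Rightarrow> real" where "L t = ln (1-2*t) - ln t"
definition Nf :: "real \<Rightarrow> real" where "Nf t = 3 * L t - (1-3*t)/(t*(1-2*t))"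
definition f1 :: "real \<Rightarrow> real" where "f1 t = 2/(3*(1-3*t)) * L t"
definition Gf :: "real \<Rightarrow> real" where "Gf t = ln 3 + (2/3 - t)*ln(1-2*t) + (1/3+t)*ln t"
definition phi :: "real \<Rightarrow> real" where "phi t = L t - 3*(1-3*t)"

lemma L_deriv: "0<x \<Longrightarrow> x<1/2 \<Longrightarrow> (L has_real_derivative (-2/(1-2*x) - 1/x)) (at x)"
  unfolding L_def by (auto intro!: derivative_eq_intros simp: field_simps)

lemma Gf_deriv: assumes "0<x" "x<1/2" shows "(Gf has_real_derivative (- Nf x / 3)) (at x)"
proof -
  have d: "1-2*x \<noteq> 0" "x \<noteq> 0" using assms by auto
  show ?thesis unfolding Gf_def using assms
    apply (auto intro!: derivative_eq_intros)
    using d unfolding Nf_def L_def by (simp add: field_simps)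
qed
lemma Nf_deriv: assumes "0<x" "x<1/2" shows "(Nf has_real_derivative ((3*x-1)*(4*x-1)/(x*(1-2*x))^2)) (at x)"
proof -
  have d: "1-2*x \<noteq> 0" "x \<noteq> 0" using assms by auto
  show ?thesis unfolding Nf_def L_def using assms
    apply (auto intro!: derivative_eq_intros)
    using d by (simp add: divide_simps power2_eq_square) (simp add: algebra_simps)
qed
lemma f1_deriv: assumes "0<x" "x<1/2" "x \<noteq> 1/3" shows "(f1 has_real_derivative (2/3 * Nf x / (1-3*x)^2)) (at x)"
proof -
  have d: "1-2*x \<noteq> 0" "x \<noteq> 0" "1-3*x \<noteq> 0" using assms by auto
  show ?thesis unfolding f1_def L_def using assms d
    apply (auto intro!: derivative_eq_intros)
    using d unfolding Nf_def L_def by (simp add: divide_simps power2_eq_square) (simp add: algebra_simps)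
qed
lemma phi_deriv: assumes "0<x" "x<1/2" shows "(phi has_real_derivative (-(6*x-1)*(3*x-1)/(x*(1-2*x)))) (at x)"
proof -
  have d: "1-2*x \<noteq> 0" "x \<noteq> 0" using assms by auto
  show ?thesis unfolding phi_def L_def using assms
    apply (auto intro!: derivative_eq_intros)
    using d by (simp add: field_simps)
qed

lemma cont_on:
  assumes "\<And>x. a \<le> x \<Longrightarrow> x \<le> b \<Longrightarrow> (f has_real_derivative D x) (at x)"
  shows "continuous_on {a..b} f"
  using assms by (intro continuous_at_imp_continuous_on ballI) (auto intro: DERIV_isCont)

lemma ln2_lt: "ln (2::real) < 3/4"
proof -
  have "(2::real) < 1 + 3/4 + (3/4)^2/2" by (simp add: power2_eq_square)
  also have "\<dots> \<le> exp (3/4)" by (rule exp_lower_Taylor_quadratic) simp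
  finally have "ln 2 < ln (exp (3/4::real))" by (subst ln_less_cancel_iff) auto
  thus ?thesis by simp
qed

lemma ln_ge_1m: "0 < x \<Longrightarrow> 1 - 1/x \<le> ln (x::real)"
proof -
  assume x: "0 < x"
  have "ln (1/x) \<le> 1/x - 1" using x by (intro ln_le_minus_one) simp
  thus ?thesis using x by (simp add: ln_div)
qed

lemma ln2_gt: "ln (2::real) > 2/3"
proof -
  have "ln ((15/14::real)^10) < ln 2" by (subst ln_less_cancel_iff) (simp_all add: power_divide)
  moreover have "ln ((15/14::real)^10) = 10 * ln (15/14)" by (simp add: ln_realpow)
  moreover have "1 - 1/(15/14) \<le> ln (15/14::real)" by (rule ln_ge_1m) simp
  ultimately show ?thesis by simp
qed

lemma L_alt: "0 < t \<Longrightarrow> t < 1/2 \<Longrightarrow> L t = ln ((1-2*t)/t)"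
  unfolding L_def by (simp add: ln_div)

lemma L_16: "L (1/6) = 2 * ln 2"
proof -
  have "L (1/6) = ln 4" by (subst L_alt) simp_all
  moreover have "ln ((2::real)^2) = 2 * ln 2" by (subst ln_realpow) simp
  ultimately show ?thesis by simp
qed

lemma L_14: "L (1/4) = ln 2"
  by (subst L_alt) simp_all

lemma L_13: "L (1/3) = 0"
  unfolding L_def by simp

lemma L_166: "L (1/66) = 6 * ln 2"
proof -
  have "L (1/66) = ln (2^6)" by (subst L_alt) simp_all
  moreover have "ln ((2::real)^6) = 6 * ln 2" by (subst ln_realpow) simp
  ultimately show ?thesis by simp
qed

lemma Nf_16: "Nf (1/6) < 0"
  unfolding Nf_def L_16 using ln2_lt by simp

lemma Nf_14: "Nf (1/4) > 0"
  unfolding Nf_def L_14 using ln2_gt by simp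

lemma Nf_13: "Nf (1/3) = 0"
  unfolding Nf_def L_13 by simp

lemma Nf_inc: assumes "0 < a" "a < b" "b \<le> 1/4" shows "Nf a < Nf b"
proof (rule DERIV_pos_imp_increasing_open[OF assms(2)])
  fix x assume x: "a < x" "x < b"
  have "(3*x-1)*(4*x-1) > 0" using x assms by (intro mult_neg_neg) auto
  moreover have "(x*(1-2*x))^2 > 0" using x assms by simp
  ultimately show "\<exists>y. DERIV Nf x :> y \<and> y > 0"
    using Nf_deriv[of x] x assms by (intro exI[of _ "(3*x-1)*(4*x-1)/(x*(1-2*x))^2"]) auto
next
  show "continuous_on {a..b} Nf" using assms by (intro cont_on[where D="\<lambda>x. (3*x-1)*(4*x-1)/(x*(1-2*x))^2"] Nf_deriv) auto
qed

lemma Nf_dec: assumes "1/4 \<le> a" "a < b" "b \<le> 1/3" shows "Nf a > Nf b"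
proof (rule DERIV_neg_imp_decreasing_open[OF assms(2)])
  fix x assume x: "a < x" "x < b"
  have "(3*x-1)*(4*x-1) < 0" using x assms by (intro mult_neg_pos) auto
  moreover have "(x*(1-2*x))^2 > 0" using x assms by simp
  ultimately show "\<exists>y. DERIV Nf x :> y \<and> y < 0"
    using Nf_deriv[of x] x assms by (intro exI[of _ "(3*x-1)*(4*x-1)/(x*(1-2*x))^2"]) (auto simp: divide_neg_pos)
next
  show "continuous_on {a..b} Nf" using assms by (intro cont_on[where D="\<lambda>x. (3*x-1)*(4*x-1)/(x*(1-2*x))^2"] Nf_deriv) auto
qed


lemma Nf_cont: "0 < a \<Longrightarrow> b < 1/2 \<Longrightarrow> continuous_on {a..b} Nf"
  by (intro cont_on[where D="\<lambda>x. (3*x-1)*(4*x-1)/(x*(1-2*x))^2"] Nf_deriv) auto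

lemma m_ex: "\<exists>m. 1/6 < m \<and> m < 1/4 \<and> Nf m = 0"
proof -
  obtain m where m: "1/6 \<le> m" "m \<le> 1/4" "Nf m = 0"
    using IVT'[of Nf "1/6" 0 "1/4"] Nf_16 Nf_14 Nf_cont[of "1/6" "1/4"] by auto
  moreover have "m \<noteq> 1/6"
  proof assume "m = 1/6" with m(3) Nf_16 show False by simp qed
  moreover have "m \<noteq> 1/4"
  proof assume "m = 1/4" with m(3) Nf_14 show False by simp qed
  ultimately show ?thesis by (intro exI[of _ m]) auto
qed

definition mm :: real where "mm = (SOME m. 1/6 < m \<and> m < 1/4 \<and> Nf m = 0)"

lemma mm: "1/6 < mm" "mm < 1/4" "Nf mm = 0"
  using someI_ex[OF m_ex] unfolding mm_def[symmetric] by auto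

lemma Nf_neg: "0 < x \<Longrightarrow> x < mm \<Longrightarrow> Nf x < 0"
  using Nf_inc[of x mm] mm by auto

lemma Nf_pos: assumes "mm < x" "x < 1/3" shows "Nf x > 0"
proof (cases "x \<le> 1/4")
  case True thus ?thesis using Nf_inc[of mm x] mm assms by auto
next
  case False thus ?thesis using Nf_dec[of x "1/3"] Nf_13 assms by auto
qed

lemma f1_cont: "0 < a \<Longrightarrow> b < 1/3 \<Longrightarrow> continuous_on {a..b} f1"
  by (intro cont_on[where D="\<lambda>x. 2/3 * Nf x / (1-3*x)^2"] f1_deriv) auto

lemma f1_dec: assumes "0 < a" "a < b" "b \<le> mm" shows "f1 a > f1 b"
proof (rule DERIV_neg_imp_decreasing_open[OF assms(2)])
  fix x assume x: "a < x" "x < b"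
  have "Nf x < 0" using Nf_neg x assms by auto
  moreover have "(1-3*x)^2 > 0" using x assms mm by simp
  ultimately show "\<exists>y. DERIV f1 x :> y \<and> y < 0"
    using f1_deriv[of x] x assms mm by (intro exI[of _ "2/3 * Nf x / (1-3*x)^2"]) (auto simp: divide_neg_pos)
next
  show "continuous_on {a..b} f1" using assms mm by (intro f1_cont) auto
qed

lemma f1_inc: assumes "mm \<le> a" "a < b" "b < 1/3" shows "f1 a < f1 b"
proof (rule DERIV_pos_imp_increasing_open[OF assms(2)])
  fix x assume x: "a < x" "x < b"
  have "Nf x > 0" using Nf_pos x assms by auto
  moreover have "(1-3*x)^2 > 0" using x assms mm by simp
  ultimately show "\<exists>y. DERIV f1 x :> y \<and> y > 0"
    using f1_deriv[of x] x assms mm by (intro exI[of _ "2/3 * Nf x / (1-3*x)^2"]) auto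
next
  show "continuous_on {a..b} f1" using assms mm by (intro f1_cont) auto
qed

lemma Gf_inc: assumes "0 < a" "a < b" "b \<le> mm" shows "Gf a < Gf b"
proof (rule DERIV_pos_imp_increasing_open[OF assms(2)])
  fix x assume x: "a < x" "x < b"
  have "Nf x < 0" using Nf_neg x assms by auto
  thus "\<exists>y. DERIV Gf x :> y \<and> y > 0"
    using Gf_deriv[of x] x assms mm by (intro exI[of _ "- Nf x / 3"]) auto
next
  show "continuous_on {a..b} Gf" using assms mm by (intro cont_on[where D="\<lambda>x. - Nf x / 3"] Gf_deriv) auto
qed

lemma Gf_16: "Gf (1/6) = 0"
proof -
  have "Gf (1/6) = ln 3 + (1/2) * (ln (2/3) + ln (1/6))" unfolding Gf_def by (simp add: algebra_simps)
  also have "ln (2/3) + ln (1/6) = ln ((2/3) * (1/6::real))" by (subst ln_mult) auto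
  also have "(2/3) * (1/6::real) = 1/9" by simp
  also have "ln (1/9::real) = - 2 * ln 3"
  proof -
    have "ln ((3::real)^2) = 2 * ln 3" by (subst ln_realpow) simp
    thus ?thesis by (simp add: ln_div)
  qed
  finally show ?thesis by simp
qed

lemma phi_13: "phi (1/3) = 0" unfolding phi_def L_13 by simp

lemma phi_neg: assumes "1/3 < t" "t < 1/2" shows "phi t < 0"
proof -
  have "phi (1/3) > phi t"
  proof (rule DERIV_neg_imp_decreasing_open[OF assms(1)])
    fix x assume x: "1/3 < x" "x < t"
    have "(1-6*x)*(3*x-1) < 0" using x by (intro mult_neg_pos) auto
    moreover have "x*(1-2*x) > 0" using x assms by simp
    ultimately have "-(6*x-1)*(3*x-1)/(x*(1-2*x)) < 0" by (simp add: divide_neg_pos)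
    thus "\<exists>y. DERIV phi x :> y \<and> y < 0"
      using phi_deriv[of x] x assms by (intro exI[of _ "-(6*x-1)*(3*x-1)/(x*(1-2*x))"]) auto
  next
    show "continuous_on {1/3..t} phi" using assms
      by (intro cont_on[where D="\<lambda>x. -(6*x-1)*(3*x-1)/(x*(1-2*x))"] phi_deriv) auto
  qed
  thus ?thesis using phi_13 by simp
qed

lemma f1_gt2: assumes "1/3 < t" "t < 1/2" shows "f1 t > 2"
proof -
  have "L t < 3*(1-3*t)" using phi_neg[OF assms] unfolding phi_def by simp
  hence "L t / (1-3*t) > 3" using assms by (simp add: less_divide_eq)
  moreover have "f1 t = 2/3 * (L t/(1-3*t))" unfolding f1_def by simp
  ultimately show ?thesis by linarith
qed

lemma f1_16: "f1 (1/6) = 8/3 * ln 2" unfolding f1_def L_16 by simp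

lemma f1_166: "f1 (1/66) > 2" unfolding f1_def L_166 using ln2_gt by simp

lemma f0_f1: "t \<noteq> 1/3 \<Longrightarrow> 0 < t \<Longrightarrow> t < 1/2 \<Longrightarrow> f0 t = f1 t"
  unfolding f0_def f1_def by (simp add: L_alt)


lemma f1_pos: assumes "0 < t" "t < 1/3" shows "f1 t > 0"
proof -
  have "(1-2*t)/t > 1" using assms by (simp add: field_simps)
  hence "L t > 0" using assms by (simp add: L_alt)
  thus ?thesis unfolding f1_def using assms by simp
qed

lemma f1_mm: "f1 mm < f1 (1/6)" using f1_dec[of "1/6" mm] mm by auto

lemma f1_16_lt2: "f1 (1/6) < 2" using ln2_lt f1_16 by simp

lemma f0_min: assumes "0 < t" "t < 1/2" "t \<noteq> mm" shows "f0 t > f1 mm"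
proof -
  consider "t < mm" | "mm < t" "t < 1/3" | "t = 1/3" | "1/3 < t" using assms by linarith
  thus ?thesis
  proof cases
    case 1 thus ?thesis using f1_dec[of t mm] f0_f1[of t] assms mm by auto
  next
    case 2 thus ?thesis using f1_inc[of mm t] f0_f1[of t] assms mm by auto
  next
    case 3 thus ?thesis using f1_mm f1_16_lt2 unfolding f0_def by auto
  next
    case 4 thus ?thesis using f1_gt2[of t] f0_f1[of t] assms f1_mm f1_16_lt2 by auto
  qed
qed

lemma m0_eq: "m0 = mm"
  unfolding m0_def
proof (rule the_equality)
  have "f0 mm = f1 mm" using mm by (intro f0_f1) auto
  thus "0 < mm \<and> mm < 1/2 \<and> (\<forall>t. 0 < t \<and> t < 1/2 \<longrightarrow> f0 mm \<le> f0 t)"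
    using mm f0_min by (auto simp: less_imp_le) (metis f0_min less_eq_real_def)
next
  fix m assume m: "0 < m \<and> m < 1/2 \<and> (\<forall>t. 0 < t \<and> t < 1/2 \<longrightarrow> f0 m \<le> f0 t)"
  have "f0 mm = f1 mm" using mm by (intro f0_f1) auto
  moreover have "f0 m \<le> f0 mm" using m mm by auto
  ultimately show "m = mm" using f0_min[of m] m by force
qed

lemma beta3_eq: "beta3 = f1 mm"
  unfolding beta3_def m0_eq using mm by (intro f0_f1) auto

lemma pbeta_eq: assumes "0 < t" "t \<le> mm" "f1 t = \<beta>" shows "pbeta \<beta> = t"
  unfolding pbeta_def
proof (rule Least_equality)
  show "0 < t \<and> t < 1/2 \<and> f0 t = \<beta>" using assms mm f0_f1[of t] by auto
next
  fix y assume y: "0 < y \<and> y < 1/2 \<and> f0 y = \<beta>"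
  show "t \<le> y"
  proof (rule ccontr)
    assume "\<not> t \<le> y"
    hence "y < t" by simp
    hence "f1 y > f1 t" using f1_dec[of y t] y assms by auto
    moreover have "f0 y = f1 y" using y \<open>y < t\<close> assms mm by (intro f0_f1) auto
    ultimately show False using y assms by simp
  qed
qed

lemma ivt_f1: assumes "f1 mm < \<beta>" "\<beta> \<le> 2" shows "\<exists>t. 0 < t \<and> t < mm \<and> f1 t = \<beta>"
proof -
  obtain t where t: "1/66 \<le> t" "t \<le> mm" "f1 t = \<beta>"
    using IVT2'[of f1 mm \<beta> "1/66"] assms f1_166 mm f1_cont[of "1/66" mm] by auto
  moreover have "t \<noteq> mm" using t assms by auto
  ultimately show ?thesis by (intro exI[of _ t]) auto
qed

lemma vx_vals: "vx 0 = 1" "vx 1 = -1/2" "vx 2 = -1/2"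
proof -
  show "vx 0 = 1" unfolding vx_def by simp
  show "vx 1 = -1/2" unfolding vx_def using cos_120 by simp
  have "2 * pi * real (2::nat) / 3 = pi/3 + pi" by simp
  hence "vx 2 = cos (pi/3 + pi)" unfolding vx_def by simp
  also have "\<dots> = - cos (pi/3)" by (rule cos_periodic_pi)
  finally show "vx 2 = -1/2" using cos_60 by simp
qed

lemma vy_vals: "vy 0 = 0" "vy 2 = - vy 1"
proof -
  show "vy 0 = 0" unfolding vy_def by simp
  have "2 * pi * real (2::nat) / 3 = pi/3 + pi" by simp
  hence "vy 2 = sin (pi/3 + pi)" unfolding vy_def by simp
  also have "\<dots> = - sin (pi/3)" by (rule sin_periodic_pi)
  also have "sin (pi/3) = sin (pi - pi/3)" by (rule sin_pi_minus[symmetric])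
  also have "pi - pi/3 = 2 * pi * real (1::nat) / 3" by simp
  finally show "vy 2 = - vy 1" unfolding vy_def by (simp only:)
qed

lemma Fbeta_pp: "Fbeta \<beta> p p = -(1/2)*(1-3*p)^2 + (1/\<beta>)*((1-2*p)*ln(3*(1-2*p)) + 2*p*ln(3*p))"
proof -
  have A: "{..2::nat} = {0,1,2}" by auto
  show ?thesis unfolding Fbeta_def A using vx_vals vy_vals
    by (simp add: bary_def algebra_simps power2_eq_square)
qed

lemma hbeta_eq: assumes "pbeta \<beta> = p" "\<beta> = f1 p" "0 < p" "p < 1/3" shows "hbeta \<beta> = Gf p / \<beta>"
proof -
  have bp: "\<beta> > 0" using f1_pos assms by simp
  have h: "hbeta \<beta> = -(1/2)*(1-3*p)^2 + (1/\<beta>)*((1-2*p)*ln(3*(1-2*p)) + 2*p*ln(3*p))"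
    unfolding hbeta_def assms(1) Fbeta_pp ..
  have e1: "\<beta>*(1-3*p)^2/2 = (1-3*p)*L p/3" using assms(3,4) unfolding assms(2) f1_def by (simp add: field_simps power2_eq_square)
  have e2: "(1-2*p)*ln(3*(1-2*p)) + 2*p*ln(3*p) - (1-3*p)*L p/3 = Gf p"
  proof -
    have "ln(3*(1-2*p)) = ln 3 + ln(1-2*p)" using assms by (intro ln_mult_pos) auto
    moreover have "ln(3*p) = ln 3 + ln p" using assms by (intro ln_mult_pos) auto
    ultimately show ?thesis unfolding Gf_def L_def by (simp only:) (simp add: field_simps)
  qed
  have "hbeta \<beta> = ((1-2*p)*ln(3*(1-2*p)) + 2*p*ln(3*p) - \<beta>*(1-3*p)^2/2) / \<beta>"
    unfolding h using bp by (simp add: field_simps)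
  also have "\<dots> = Gf p / \<beta>" using e1 e2 by simp
  finally show ?thesis .
qed

theorem lemma4p3:
  shows "\<exists>\<beta>2. beta3 < \<beta>2 \<and> \<beta>2 < beta1
          \<and> (\<forall>\<beta>. beta3 < \<beta> \<and> \<beta> < \<beta>2 \<longrightarrow> hbeta \<beta> > 0)
          \<and> hbeta \<beta>2 = 0
          \<and> (\<forall>\<beta>. \<beta>2 < \<beta> \<and> \<beta> < beta1 \<longrightarrow> hbeta \<beta> < 0)"
proof (intro exI[of _ "f1 (1/6)"] conjI allI impI)
  show "beta3 < f1 (1/6)" using f1_mm beta3_eq by simp
  show "f1 (1/6) < beta1" using f1_16_lt2 beta1_def by simp
  have p16: "pbeta (f1 (1/6)) = 1/6" using mm by (intro pbeta_eq) auto
  show "hbeta (f1 (1/6)) = 0" using hbeta_eq[OF p16] Gf_16 by simp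
next
  fix \<beta> assume b: "beta3 < \<beta> \<and> \<beta> < f1 (1/6)"
  obtain t where t: "0 < t" "t < mm" "f1 t = \<beta>"
    using ivt_f1[of \<beta>] b beta3_eq f1_16_lt2 by auto
  have "1/6 < t"
  proof (rule ccontr)
    assume "\<not> 1/6 < t"
    hence "t \<le> 1/6" by simp
    have "f1 t \<ge> f1 (1/6)"
    proof (cases "t = 1/6")
      case True then show ?thesis by (metis order_refl)
    next
      case False then show ?thesis using \<open>t \<le> 1/6\<close> f1_dec[of t "1/6"] t mm by auto
    qed
    thus False using t b by simp
  qed
  hence "Gf t > 0" using Gf_inc[of "1/6" t] Gf_16 t by simp
  moreover have "hbeta \<beta> = Gf t / \<beta>" using t mm by (intro hbeta_eq pbeta_eq) auto
  moreover have "\<beta> > 0" using f1_pos[of t] t mm by simp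
  ultimately show "hbeta \<beta> > 0" by simp
next
  fix \<beta> assume b: "f1 (1/6) < \<beta> \<and> \<beta> < beta1"
  obtain t where t: "0 < t" "t < mm" "f1 t = \<beta>"
    using ivt_f1[of \<beta>] b f1_mm beta1_def by auto
  have "t < 1/6"
  proof (rule ccontr)
    assume "\<not> t < 1/6"
    hence "1/6 \<le> t" by simp
    have "f1 t \<le> f1 (1/6)"
    proof (cases "t = 1/6")
      case True then show ?thesis by (metis order_refl)
    next
      case False then show ?thesis using \<open>1/6 \<le> t\<close> f1_dec[of "1/6" t] t mm by auto
    qed
    thus False using t b by simp
  qed
  hence "Gf t < 0" using Gf_inc[of t "1/6"] Gf_16 t mm by simp
  moreover have "hbeta \<beta> = Gf t / \<beta>" using t mm by (intro hbeta_eq pbeta_eq) auto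
  moreover have "\<beta> > 0" using f1_pos[of t] t mm by simp
  ultimately show "hbeta \<beta> < 0" by (simp add: divide_neg_pos)
qed

end
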